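(* Let $X_0:=0$ and let $X_1,X_2,\dots$ be independent uniform random variables on $(0,1]$. For $m\ge1$ let $Z_m:=X_m-\max\{X_j:0\le j<m,\ X_j<X_m\}$. Then: (i) $Z_m$ has distribution function $F_m$ with $F_m(t)=0$ for $t<0$, $F_m(t)=1$ for $t>1$, and $F_m(t)=1-(1-t)^m$ for $0\le t\le1$. (ii) For $\alpha>0$, $$E[Z_m^\alpha]=\frac{m!\,\Gamma(1+\alpha)}{\Gamma(1+\alpha+m)},\qquad\mathrm{Var}[Z_m^\alpha]=\frac{m!\,\Gamma(1+2\alpha)}{\Gamma(1+2\alpha+m)}-\left(\frac{m!\,\Gamma(1+\alpha)}{\Gamma(1+\alpha+m)}\right)^2;$$ in particular $E[Z_m]=1/(m+1)$ and $\mathrm{Var}[Z_m]=m/((m+1)^2(m+2))$. (iii) For $\alpha>0$, as $m\to\infty$, $E[Z_m^\alpha]\sim\Gamma(\alpha+1)m^{-\alpha}$ and $\mathrm{Var}[Z_m^\alpha]\sim(\Gamma(2\alpha+1)-\Gamma(\alpha+1)^2)m^{-2\alpha}$. (iv) As $m\to\infty$, $mZ_m$ converges in distribution to an exponential random variable with parameter $1$. *)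

theory Defs
  imports "HOL-Probability.Probability" "HOL-Library.Landau_Symbols"
begin

text \<open>Z_m = X_m - max{X_j : 0 \<le> j < m, X_j < X_m}, with the convention X_0 = 0
  (the value 0 is always included in the set, standing for X_0).\<close>
definition gapZ :: "(nat \<Rightarrow> 'a \<Rightarrow> real) \<Rightarrow> nat \<Rightarrow> 'a \<Rightarrow> real" where
  "gapZ X m \<omega> = X m \<omega> - Max (insert 0 {X j \<omega> | j. 1 \<le> j \<and> j < m \<and> X j \<omega> < X m \<omega>})"

definition gapF :: "nat \<Rightarrow> real \<Rightarrow> real" where
  "gapF m t = (if t < 0 then 0 else if t > 1 then 1 else 1 - (1 - t) ^ m)"

end

theory Submission
  imports Defs
begin


lemma gapZ_gt_iff:
  "t < gapZ X m \<omega> \<longleftrightarrow> t < X m \<omega> \<and> (\<forall>j\<in>{1..<m}. X m \<omega> \<le> X j \<omega> \<or> X j \<omega> < X m \<omega> - t)"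
proof -
  let ?S = "{X j \<omega> | j. 1 \<le> j \<and> j < m \<and> X j \<omega> < X m \<omega>}"
  have fin: "finite ?S"
    by (rule finite_subset[of _ "(\<lambda>j. X j \<omega>) ` {1..<m}"]) auto
  have "t < gapZ X m \<omega> \<longleftrightarrow> Max (insert 0 ?S) < X m \<omega> - t"
    unfolding gapZ_def by linarith
  also have "\<dots> \<longleftrightarrow> 0 < X m \<omega> - t \<and> (\<forall>s\<in>?S. s < X m \<omega> - t)"
    using fin by simp
  also have "\<dots> \<longleftrightarrow> t < X m \<omega> \<and> (\<forall>j\<in>{1..<m}. X m \<omega> \<le> X j \<omega> \<or> X j \<omega> < X m \<omega> - t)"
  proof (intro iffI conjI ballI)
    fix j assume A: "0 < X m \<omega> - t \<and> (\<forall>s\<in>?S. s < X m \<omega> - t)" and j: "j \<in> {1..<m}"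
    show "X m \<omega> \<le> X j \<omega> \<or> X j \<omega> < X m \<omega> - t"
    proof (cases "X j \<omega> < X m \<omega>")
      case True
      then have "X j \<omega> \<in> ?S" using j by auto
      then show ?thesis using A by blast
    qed auto
  qed (auto, metis One_nat_def atLeastLessThan_iff leD)
  finally show ?thesis .
qed

lemma gapZ_measurable:
  assumes "\<And>i. i \<ge> 1 \<Longrightarrow> X i \<in> borel_measurable M" "m \<ge> 1"
  shows "gapZ X m \<in> borel_measurable M"
proof (subst borel_measurable_iff_greater, intro allI)
  fix t
  have [measurable]: "X m \<in> borel_measurable M" using assms by auto
  have "{w \<in> space M. t < gapZ X m w} = {w \<in> space M. t < X m w \<and> (\<forall>j\<in>{1..<m}. X m w \<le> X j w \<or> X j w < X m w - t)}"
    by (simp add: gapZ_gt_iff)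
  also have "\<dots> \<in> sets M"
  proof -
    have [measurable]: "Measurable.pred M (\<lambda>w. \<forall>j\<in>{1..<m}. X m w \<le> X j w \<or> X j w < X m w - t)"
    proof (rule pred_intros_finite)
      fix j assume "j \<in> {1..<m}"
      then have [measurable]: "X j \<in> borel_measurable M" using assms by auto
      show "Measurable.pred M (\<lambda>w. X m w \<le> X j w \<or> X j w < X m w - t)" by measurable
    qed auto
    show ?thesis by measurable
  qed
  finally show "{w \<in> space M. t < gapZ X m w} \<in> sets M" .
qed


abbreviation "U01 \<equiv> uniform_measure lborel {0<..1::real}"

lemma prob_space_U01: "prob_space U01"
  by (rule prob_space_uniform_measure) auto

lemma sets_U01[measurable_cong]: "sets U01 = sets borel" by simp

lemma emeasure_U01: "A \<in> sets borel \<Longrightarrow> emeasure U01 A = emeasure lborel ({0<..1} \<inter> A)"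
  by (subst emeasure_uniform_measure) (auto simp: divide_ennreal_def)

lemma emeasure_U01_B:
  assumes "0 \<le> t" "t < y" "y \<le> 1"
  shows "emeasure U01 {z. y \<le> z \<or> z < y - t} = ennreal (1 - t)"
proof -
  have "{0<..1} \<inter> {z. y \<le> z \<or> z < y - t} = {0<..1::real} - {y-t..<y}"
    using assms by auto
  then have "emeasure U01 {z. y \<le> z \<or> z < y - t} = emeasure lborel ({0<..1::real} - {y-t..<y})"
    by (subst emeasure_U01) auto
  also have "\<dots> = emeasure lborel {0<..1::real} - emeasure lborel {y-t..<y}"
    using assms by (intro emeasure_Diff) auto
  also have "\<dots> = ennreal 1 - ennreal t" using assms by simp
  also have "\<dots> = ennreal (1 - t)" using assms by (simp only: ennreal_minus)
  finally show ?thesis .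
qed

definition evP :: "nat \<Rightarrow> real \<Rightarrow> (nat \<Rightarrow> real) \<Rightarrow> bool" where
  "evP m t f \<longleftrightarrow> t < f m \<and> (\<forall>j\<in>{1..<m}. f m \<le> f j \<or> f j < f m - t)"

lemma evP_sets:
  assumes "m \<ge> 1"
  shows "{f \<in> space (PiM {1..m} (\<lambda>_. borel)). evP m t f} \<in> sets (PiM {1..m} (\<lambda>_. borel::real measure))"
proof -
  have mm: "m \<in> {1..m}" using assms by auto
  have [measurable]: "Measurable.pred (PiM {1..m} (\<lambda>_. borel::real measure)) (\<lambda>f. \<forall>j\<in>{1..<m}. f m \<le> f j \<or> f j < f m - t)"
  proof (rule pred_intros_finite)
    fix j assume "j \<in> {1..<m}"
    then have mj: "(\<lambda>f. f j) \<in> borel_measurable (PiM {1..m} (\<lambda>_. borel::real measure))" by (intro measurable_component_singleton) auto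
    have mm': "(\<lambda>f. f m) \<in> borel_measurable (PiM {1..m} (\<lambda>_. borel::real measure))" using mm by (intro measurable_component_singleton) auto
    have "Measurable.pred (PiM {1..m} (\<lambda>_. borel::real measure)) (\<lambda>f. \<not> f j < f m \<or> f j < f m - t)"
      using mj mm' by (intro pred_intros_logic borel_measurable_pred_less borel_measurable_diff) auto
    then show "Measurable.pred (PiM {1..m} (\<lambda>_. borel::real measure)) (\<lambda>f. f m \<le> f j \<or> f j < f m - t)"
      by (simp add: not_less)
  qed auto
  have [measurable]: "(\<lambda>f. f m) \<in> borel_measurable (PiM {1..m} (\<lambda>_. borel::real measure))" using mm by measurable
  show ?thesis unfolding evP_def by measurable
qed

lemma prod_comp:
  assumes m: "m \<ge> 1" and t: "0 \<le> t" "t \<le> 1"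
  shows "emeasure (PiM {1..m} (\<lambda>_. U01)) {f \<in> space (PiM {1..m} (\<lambda>_. borel)). evP m t f} = ennreal ((1-t)^m)"
proof -
  interpret U: prob_space U01 by (rule prob_space_U01)
  interpret P: product_prob_space "\<lambda>_::nat. U01" "{}"
    by unfold_locales
  let ?E = "{f \<in> space (PiM {1..m} (\<lambda>_. borel)). evP m t f}"
  let ?I = "{1..<m}"
  define B where "B y = {z::real. y \<le> z \<or> z < y - t}" for y
  have ins: "{1..m} = insert m ?I" using m by auto
  have setsEq: "sets (PiM {1..m} (\<lambda>_. U01)) = sets (PiM {1..m} (\<lambda>_. borel::real measure))"
    by (intro sets_PiM_cong) auto
  have spEq: "space (PiM {1..m} (\<lambda>_. U01)) = space (PiM {1..m} (\<lambda>_. borel::real measure))"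
    by (intro sets_eq_imp_space_eq setsEq)
  have Esets: "?E \<in> sets (PiM (insert m ?I) (\<lambda>_. U01))"
    using evP_sets[OF m, of t] setsEq ins by simp
  have "emeasure (PiM {1..m} (\<lambda>_. U01)) ?E = (\<integral>\<^sup>+ f. indicator ?E f \<partial>PiM (insert m ?I) (\<lambda>_. U01))"
    using Esets ins by simp
  also have "\<dots> = (\<integral>\<^sup>+ y. (\<integral>\<^sup>+ x. indicator ?E (x(m := y)) \<partial>PiM ?I (\<lambda>_. U01)) \<partial>U01)"
    using Esets by (intro P.product_nn_integral_insert_rev) auto
  also have "\<dots> = (\<integral>\<^sup>+ y. indicator {t<..} y * emeasure (PiM ?I (\<lambda>_. U01)) (PiE ?I (\<lambda>_. B y)) \<partial>U01)"
  proof (intro nn_integral_cong)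
    fix y assume "y \<in> space U01"
    have "(\<integral>\<^sup>+ x. indicator ?E (x(m := y)) \<partial>PiM ?I (\<lambda>_. U01))
        = (\<integral>\<^sup>+ x. indicator {t<..} y * indicator (PiE ?I (\<lambda>_. B y)) x \<partial>PiM ?I (\<lambda>_. U01))"
    proof (intro nn_integral_cong)
      fix x assume x: "x \<in> space (PiM ?I (\<lambda>_. U01))"
      then have xe: "x \<in> PiE ?I (\<lambda>_. UNIV)" by (simp add: space_PiM)
      then have "x(m := y) \<in> space (PiM {1..m} (\<lambda>_. borel::real measure))"
        using m by (auto simp: space_PiM PiE_def extensional_def)
      moreover have "evP m t (x(m := y)) \<longleftrightarrow> t < y \<and> x \<in> PiE ?I (\<lambda>_. B y)"
        using xe by (auto simp: evP_def B_def PiE_def Pi_def)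
      ultimately have ev: "x(m := y) \<in> ?E \<longleftrightarrow> t < y \<and> x \<in> PiE ?I (\<lambda>_. B y)"
        by blast
      show "indicator ?E (x(m := y)) = (indicator {t<..} y * indicator (PiE ?I (\<lambda>_. B y)) x :: ennreal)"
      proof (cases "t < y \<and> x \<in> PiE ?I (\<lambda>_. B y)")
        case True
        then show ?thesis using ev by simp
      next
        case False
        then have "indicator {t<..} y * indicator (PiE ?I (\<lambda>_. B y)) x = (0::ennreal)"
          by (auto simp: indicator_def)
        then show ?thesis using ev False by simp
      qed
    qed
    also have "\<dots> = indicator {t<..} y * emeasure (PiM ?I (\<lambda>_. U01)) (PiE ?I (\<lambda>_. B y))"
      by (subst nn_integral_cmult_indicator) (auto simp: B_def)
    finally show "(\<integral>\<^sup>+ x. indicator ?E (x(m := y)) \<partial>PiM ?I (\<lambda>_. U01)) = indicator {t<..} y * emeasure (PiM ?I (\<lambda>_. U01)) (PiE ?I (\<lambda>_. B y))" .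
  qed
  also have "\<dots> = (\<integral>\<^sup>+ y. indicator {t<..} y * emeasure U01 (B y) ^ (m - 1) \<partial>U01)"
    by (intro nn_integral_cong) (simp add: P.emeasure_PiM B_def)
  also have "\<dots> = (\<integral>\<^sup>+ y. (indicator {t<..} y * emeasure U01 (B y) ^ (m - 1)) * indicator {0<..1} y \<partial>lborel) / emeasure lborel {0<..1::real}"
    by (rule nn_integral_uniform_measure) (auto simp: B_def)
  also have "\<dots> = (\<integral>\<^sup>+ y. ennreal ((1 - t) ^ (m - 1)) * indicator {t<..1} y \<partial>lborel)"
  proof -
    have "(indicator {t<..} y * emeasure U01 (B y) ^ (m - 1)) * indicator {0<..1} y = ennreal ((1 - t) ^ (m - 1)) * indicator {t<..1} y" for y
    proof (cases "t < y \<and> y \<le> 1")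
      case True
      then show ?thesis using t emeasure_U01_B[of t y] by (auto simp: B_def indicator_def ennreal_power)
    qed (auto simp: indicator_def)
    then show ?thesis by (simp add: divide_ennreal_def)
  qed
  also have "\<dots> = ennreal ((1 - t) ^ (m - 1)) * ennreal (1 - t)"
    using t by (subst nn_integral_cmult_indicator) auto
  also have "\<dots> = ennreal ((1 - t) ^ m)"
    using t m by (subst ennreal_mult''[symmetric]) (auto simp: power_Suc2[symmetric] simp del: power_Suc2)
  finally show ?thesis .
qed


lemma gapZ_tail:
  assumes P: "prob_space M" and ind: "prob_space.indep_vars M (\<lambda>_. borel) X {1..}"
    and U: "\<And>i. i \<ge> 1 \<Longrightarrow> distr M lborel (X i) = U01"
    and m: "m \<ge> 1" and t: "0 \<le> t" "t \<le> 1"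
  shows "emeasure M {\<omega>\<in>space M. t < gapZ X m \<omega>} = ennreal ((1-t)^m)"
proof -
  interpret prob_space M by fact
  have meas: "X i \<in> borel_measurable M" if "i \<ge> 1" for i using ind that by (auto simp: indep_vars_def)
  have ind': "indep_vars (\<lambda>_. borel) X {1..m}" by (rule indep_vars_subset[OF ind]) auto
  let ?Y = "\<lambda>\<omega>. \<lambda>i\<in>{1..m}. X i \<omega>"
  let ?E = "{f \<in> space (PiM {1..m} (\<lambda>_. borel)). evP m t f}"
  have Ym: "?Y \<in> measurable M (PiM {1..m} (\<lambda>_. borel))"
    by (intro measurable_restrict meas) auto
  have "distr M (PiM {1..m} (\<lambda>_. borel)) ?Y = PiM {1..m} (\<lambda>i. distr M borel (X i))"
    using ind' m by (subst indep_vars_iff_distr_eq_PiM'[symmetric]) (auto intro: meas)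
  also have "\<dots> = PiM {1..m} (\<lambda>_. U01)"
  proof (intro PiM_cong refl)
    fix i assume "i \<in> {1..m}"
    then show "distr M borel (X i) = U01"
      using U[of i] distr_cong[OF refl sets_lborel[symmetric], of M "X i" "X i"] by auto
  qed
  finally have dY: "distr M (PiM {1..m} (\<lambda>_. borel)) ?Y = PiM {1..m} (\<lambda>_. U01)" .
  have "{\<omega>\<in>space M. t < gapZ X m \<omega>} = ?Y -` ?E \<inter> space M"
  proof (intro set_eqI iffI)
    fix \<omega> assume "\<omega> \<in> {\<omega>\<in>space M. t < gapZ X m \<omega>}"
    then show "\<omega> \<in> ?Y -` ?E \<inter> space M"
      using measurable_space[OF Ym] m by (auto simp: gapZ_gt_iff evP_def)
  next
    fix \<omega> assume "\<omega> \<in> ?Y -` ?E \<inter> space M"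
    then show "\<omega> \<in> {\<omega>\<in>space M. t < gapZ X m \<omega>}"
      using m by (auto simp: gapZ_gt_iff evP_def)
  qed
  also have "emeasure M \<dots> = emeasure (distr M (PiM {1..m} (\<lambda>_. borel)) ?Y) ?E"
    by (rule emeasure_distr[symmetric, OF Ym evP_sets[OF m]])
  also have "\<dots> = ennreal ((1-t)^m)"
    unfolding dY by (rule prod_comp[OF m t])
  finally show ?thesis .
qed


lemma gapF_from_01:
  assumes N: "real_distribution N" and m: "m \<ge> 1"
    and h: "\<And>t. 0 \<le> t \<Longrightarrow> t \<le> 1 \<Longrightarrow> cdf N t = 1 - (1 - t) ^ m"
  shows "cdf N t = gapF m t"
proof -
  interpret real_distribution N by fact
  consider "t < 0" | "t > 1" | "0 \<le> t \<and> t \<le> 1" by linarith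
  then show ?thesis
  proof cases
    case 1
    then have "cdf N t \<le> cdf N 0" by (intro cdf_nondecreasing) auto
    also have "\<dots> = 0" using h[of 0] by simp
    finally show ?thesis using 1 cdf_nonneg[of t] by (simp add: gapF_def)
  next
    case 2
    then have "cdf N 1 \<le> cdf N t" by (intro cdf_nondecreasing) auto
    moreover have "cdf N 1 = 1" using h[of 1] m by simp
    ultimately show ?thesis using 2 cdf_bounded_prob[of t] by (simp add: gapF_def)
  next
    case 3
    then show ?thesis using h[of t] by (simp add: gapF_def)
  qed
qed

locale gapsetup =
  fixes M :: "'a measure" and X :: "nat \<Rightarrow> 'a \<Rightarrow> real"
  assumes P: "prob_space M"
    and ind: "prob_space.indep_vars M (\<lambda>_. borel) X {1..}"
    and U: "\<And>i. i \<ge> 1 \<Longrightarrow> distr M lborel (X i) = U01"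
begin

interpretation prob_space M by (rule P)

lemma measX: "i \<ge> 1 \<Longrightarrow> X i \<in> borel_measurable M"
  using ind by (auto simp: indep_vars_def)

lemma measZ: "m \<ge> 1 \<Longrightarrow> gapZ X m \<in> borel_measurable M"
  by (rule gapZ_measurable[OF measX])

lemma tailZ: "m \<ge> 1 \<Longrightarrow> 0 \<le> t \<Longrightarrow> t \<le> 1 \<Longrightarrow> prob {\<omega>\<in>space M. t < gapZ X m \<omega>} = (1-t)^m"
  using gapZ_tail[OF P ind U, of m t] by (simp add: measure_def)

lemma cdfZ:
  assumes m: "m \<ge> 1"
  shows "cdf (distr M borel (gapZ X m)) t = gapF m t"
proof (rule gapF_from_01[OF _ m])
  show "real_distribution (distr M borel (gapZ X m))" using measZ[OF m] by simp
  fix t :: real assume t: "0 \<le> t" "t \<le> 1"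
  have "cdf (distr M borel (gapZ X m)) t = prob (gapZ X m -` {..t} \<inter> space M)"
    unfolding cdf_def using measZ[OF m] by (subst measure_distr) auto
  also have "gapZ X m -` {..t} \<inter> space M = space M - {\<omega>\<in>space M. t < gapZ X m \<omega>}"
    by auto
  also have "prob \<dots> = 1 - prob {\<omega>\<in>space M. t < gapZ X m \<omega>}"
    using measZ[OF m] by (intro prob_compl) measurable
  finally show "cdf (distr M borel (gapZ X m)) t = 1 - (1 - t) ^ m"
    using tailZ[OF m t] by simp
qed

end


definition dZ :: "nat \<Rightarrow> real \<Rightarrow> real" where
  "dZ m z = indicator {0..1} z * (real m * (1 - z) ^ (m - 1))"

lemma dZ_nonneg: "0 \<le> dZ m z"
  by (auto simp: dZ_def indicator_def)

lemma dZ_meas[measurable]: "dZ m \<in> borel_measurable borel"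
  unfolding dZ_def by measurable

lemma ftc_poly:
  assumes m: "m \<ge> 1" and t: "0 \<le> t"
  shows "((\<lambda>z. real m * (1 - z) ^ (m - 1)) has_integral (1 - (1 - t) ^ m)) {0..t}"
proof -
  have "((\<lambda>z. real m * (1 - z) ^ (m - 1)) has_integral (- ((1 - t) ^ m) - - ((1 - 0) ^ m))) {0..t}"
  proof (rule fundamental_theorem_of_calculus[OF t, where f="\<lambda>z. - ((1 - z) ^ m)"])
    fix x :: real assume "x \<in> {0..t}"
    have "((\<lambda>z. - ((1 - z) ^ m)) has_real_derivative (real m * (1 - x) ^ (m - 1))) (at x within {0..t})"
      by (auto intro!: derivative_eq_intros)
    then show "((\<lambda>z. - ((1 - z) ^ m)) has_vector_derivative (real m * (1 - x) ^ (m - 1))) (at x within {0..t})"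
      by (simp add: has_real_derivative_iff_has_vector_derivative)
  qed
  then show ?thesis by simp
qed

lemma dens_int:
  assumes m: "m \<ge> 1" and t: "0 \<le> t" "t \<le> 1"
  shows "(\<integral>\<^sup>+ z. ennreal (dZ m z) * indicator {..t} z \<partial>lborel) = ennreal (1 - (1 - t) ^ m)"
proof -
  let ?g = "\<lambda>z. if z \<in> {0..t} then real m * (1 - z) ^ (m - 1) else 0"
  have "(\<integral>\<^sup>+ z. ennreal (dZ m z) * indicator {..t} z \<partial>lborel) = (\<integral>\<^sup>+ z. ennreal (?g z) \<partial>lborel)"
    using t by (intro nn_integral_cong) (auto simp: dZ_def indicator_def)
  also have "\<dots> = ennreal (1 - (1 - t) ^ m)"
  proof (rule nn_integral_has_integral_lborel)
    show "?g \<in> borel_measurable borel" by measurable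
    show "0 \<le> ?g x" for x using t by (auto intro!: mult_nonneg_nonneg zero_le_power)
    show "(?g has_integral (1 - (1 - t) ^ m)) UNIV"
      using ftc_poly[OF m t(1)] by (subst has_integral_restrict_UNIV)
  qed
  finally show ?thesis .
qed

definition DZ :: "nat \<Rightarrow> real measure" where
  "DZ m = density lborel (\<lambda>z. ennreal (dZ m z))"

lemma emeasure_DZ_le:
  assumes m: "m \<ge> 1" and t: "0 \<le> t" "t \<le> 1"
  shows "emeasure (DZ m) {..t} = ennreal (1 - (1 - t) ^ m)"
  unfolding DZ_def using dens_int[OF assms] by (subst emeasure_density) auto

lemma real_distribution_DZ:
  assumes m: "m \<ge> 1"
  shows "real_distribution (DZ m)"
proof -
  have "emeasure (DZ m) (space (DZ m)) = (\<integral>\<^sup>+ z. ennreal (dZ m z) \<partial>lborel)"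
    unfolding DZ_def by (subst emeasure_density) auto
  also have "\<dots> = (\<integral>\<^sup>+ z. ennreal (dZ m z) * indicator {..1} z \<partial>lborel)"
    by (intro nn_integral_cong) (auto simp: dZ_def indicator_def)
  also have "\<dots> = 1" using dens_int[OF m, of 1] m by simp
  finally have "prob_space (DZ m)" by (intro prob_spaceI)
  then show ?thesis
    by (auto simp: real_distribution_def real_distribution_axioms_def DZ_def)
qed

lemma cdf_DZ:
  assumes m: "m \<ge> 1"
  shows "cdf (DZ m) t = gapF m t"
proof (rule gapF_from_01[OF real_distribution_DZ[OF m] m])
  fix t :: real assume t: "0 \<le> t" "t \<le> 1"
  have "0 \<le> 1 - (1 - t) ^ m" using t by (simp add: power_le_one)
  then show "cdf (DZ m) t = 1 - (1 - t) ^ m"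
    unfolding cdf_def measure_def using emeasure_DZ_le[OF m t] by simp
qed

context gapsetup begin

interpretation prob_space M by (rule P)

lemma distrZ: "m \<ge> 1 \<Longrightarrow> distr M borel (gapZ X m) = DZ m"
  by (rule cdf_unique) (auto simp: measZ cdfZ cdf_DZ real_distribution_DZ)

end


definition rmom :: "real \<Rightarrow> nat \<Rightarrow> real" where
  "rmom a m = fact m * Gamma (1 + a) / Gamma (1 + a + real m)"

lemma rmom_nonneg: "a > 0 \<Longrightarrow> 0 \<le> rmom a m"
  unfolding rmom_def by (intro divide_nonneg_pos mult_nonneg_nonneg) auto

lemma beta_int:
  assumes m: "m \<ge> 1" and a: "a > 0"
  shows "((\<lambda>z. dZ m z * z powr a) has_integral rmom a m) UNIV"
proof -
  have B: "((\<lambda>t. t powr (a + 1 - 1) * (1 - t) powr (real m - 1)) has_integral Beta (a + 1) (real m)) {0..1}"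
    using m a by (intro has_integral_Beta_real) auto
  have B2: "((\<lambda>t. real m * (t powr (a + 1 - 1) * (1 - t) powr (real m - 1))) has_integral (real m * Beta (a + 1) (real m))) {0..1}"
    by (rule has_integral_mult_right[OF B])
  have B3: "((\<lambda>z. real m * (1 - z) ^ (m - 1) * z powr a) has_integral (real m * Beta (a + 1) (real m))) {0..1}"
  proof (rule has_integral_spike_finite[OF _ _ B2])
    show "finite {1::real}" by simp
    fix x :: real assume x: "x \<in> {0..1} - {1}"
    then have "0 < 1 - x" by auto
    then have "(1 - x) powr (real m - 1) = (1 - x) ^ (m - 1)"
      using m powr_realpow[of "1 - x" "m - 1"] by (simp add: of_nat_diff)
    then show "real m * (1 - x) ^ (m - 1) * x powr a = real m * (x powr (a + 1 - 1) * (1 - x) powr (real m - 1))"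
      by simp
  qed
  have val: "real m * Beta (a + 1) (real m) = rmom a m"
  proof -
    have g: "Gamma (real m) = fact (m - 1)"
      using Gamma_fact[of "m - 1", where 'a=real] m by (simp add: of_nat_diff)
    have f: "fact m = real m * fact (m - 1)"
      using fact_reduce[of m] m by simp
    show ?thesis unfolding rmom_def Beta_def g f by (simp add: ac_simps)
  qed
  have "((\<lambda>z. if z \<in> {0..1} then real m * (1 - z) ^ (m - 1) * z powr a else 0) has_integral rmom a m) UNIV"
    using B3 val by (subst has_integral_restrict_UNIV) simp
  moreover have "(\<lambda>z. dZ m z * z powr a) = (\<lambda>z. if z \<in> {0..1} then real m * (1 - z) ^ (m - 1) * z powr a else 0)"
    by (auto simp: dZ_def fun_eq_iff)
  ultimately show ?thesis by simp
qed

context gapsetup begin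

interpretation prob_space M by (rule P)

lemma momentZ:
  assumes m: "m \<ge> 1" and a: "a > 0"
  shows "has_bochner_integral M (\<lambda>\<omega>. gapZ X m \<omega> powr a) (rmom a m)"
proof (rule has_bochner_integral_nn_integral)
  have [measurable]: "gapZ X m \<in> borel_measurable M" by (rule measZ[OF m])
  show "(\<lambda>\<omega>. gapZ X m \<omega> powr a) \<in> borel_measurable M" by measurable
  show "AE x in M. 0 \<le> gapZ X m x powr a" by simp
  show "0 \<le> rmom a m" by (rule rmom_nonneg[OF a])
  have "(\<integral>\<^sup>+ \<omega>. ennreal (gapZ X m \<omega> powr a) \<partial>M) = (\<integral>\<^sup>+ z. ennreal (z powr a) \<partial>distr M borel (gapZ X m))"
    by (subst nn_integral_distr) auto
  also have "\<dots> = (\<integral>\<^sup>+ z. ennreal (z powr a) \<partial>DZ m)" by (simp add: distrZ[OF m])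
  also have "\<dots> = (\<integral>\<^sup>+ z. ennreal (dZ m z) * ennreal (z powr a) \<partial>lborel)"
    unfolding DZ_def by (subst nn_integral_density) auto
  also have "\<dots> = (\<integral>\<^sup>+ z. ennreal (dZ m z * z powr a) \<partial>lborel)"
    by (intro nn_integral_cong) (simp add: ennreal_mult dZ_nonneg)
  also have "\<dots> = ennreal (rmom a m)"
    by (rule nn_integral_has_integral_lborel[OF _ _ beta_int[OF m a]]) (auto intro!: mult_nonneg_nonneg dZ_nonneg)
  finally show "(\<integral>\<^sup>+ \<omega>. ennreal (gapZ X m \<omega> powr a) \<partial>M) = ennreal (rmom a m)" .
qed

lemma expZ: "m \<ge> 1 \<Longrightarrow> a > 0 \<Longrightarrow> expectation (\<lambda>\<omega>. gapZ X m \<omega> powr a) = rmom a m"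
  using momentZ by (rule has_bochner_integral_integral_eq)

lemma intZ: "m \<ge> 1 \<Longrightarrow> a > 0 \<Longrightarrow> integrable M (\<lambda>\<omega>. gapZ X m \<omega> powr a)"
  using momentZ by (meson integrable.intros)

lemma varZ:
  assumes m: "m \<ge> 1" and a: "a > 0"
  shows "variance (\<lambda>\<omega>. gapZ X m \<omega> powr a) = rmom (2 * a) m - (rmom a m)\<^sup>2"
proof -
  have sq: "(x powr a)\<^sup>2 = x powr (2 * a)" for x :: real
  proof -
    have "(x powr a)\<^sup>2 = x powr a * x powr a" by (rule power2_eq_square)
    also have "\<dots> = x powr (a + a)" by (rule powr_add[symmetric])
    finally show ?thesis by (simp only: mult_2)
  qed
  have i2: "integrable M (\<lambda>\<omega>. (gapZ X m \<omega> powr a)\<^sup>2)"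
    using intZ[OF m, of "2 * a"] a by (simp only: sq)
  have "variance (\<lambda>\<omega>. gapZ X m \<omega> powr a) = expectation (\<lambda>\<omega>. (gapZ X m \<omega> powr a)\<^sup>2) - (expectation (\<lambda>\<omega>. gapZ X m \<omega> powr a))\<^sup>2"
    by (rule variance_eq[OF intZ[OF m a] i2])
  also have "expectation (\<lambda>\<omega>. (gapZ X m \<omega> powr a)\<^sup>2) = rmom (2 * a) m"
    using expZ[OF m, of "2 * a"] a by (simp only: sq)
  finally show ?thesis using expZ[OF m a] by simp
qed

end


lemma Gamma_sq_less:
  assumes a: "(a::real) > 0"
  shows "(Gamma (1 + a))\<^sup>2 < Gamma (1 + 2 * a)"
proof -
  have der: "DERIV ln_Gamma x :> Digamma x" if "1 \<le> x" for x :: real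
    using that by (intro has_field_derivative_ln_Gamma_real) auto
  obtain z1 where z1: "1 < z1" "z1 < 1 + a" "ln_Gamma (1 + a) - ln_Gamma 1 = (1 + a - 1) * Digamma z1"
    using MVT2[of 1 "1 + a" ln_Gamma Digamma] a der by auto
  obtain z2 where z2: "1 + a < z2" "z2 < 1 + 2 * a" "ln_Gamma (1 + 2 * a) - ln_Gamma (1 + a) = (1 + 2 * a - (1 + a)) * Digamma z2"
    using MVT2[of "1 + a" "1 + 2 * a" ln_Gamma Digamma] a der by auto
  have "Digamma z1 < Digamma z2" using z1 z2 by (intro Digamma_real_strict_mono) auto
  then have "a * Digamma z1 < a * Digamma z2" using a by simp
  then have "2 * ln_Gamma (1 + a) < ln_Gamma (1 + 2 * a)"
    using z1(3) z2(3) by (simp add: ln_Gamma_real_pos)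
  then have "2 * ln (Gamma (1 + a)) < ln (Gamma (1 + 2 * a))"
    using a by (simp add: ln_Gamma_real_pos)
  then have "ln ((Gamma (1 + a))\<^sup>2) < ln (Gamma (1 + 2 * a))"
    using a by (simp add: ln_realpow)
  moreover have "Gamma (1 + a) > 0" "Gamma (1 + 2 * a) > 0" using a by auto
  ultimately show ?thesis by (subst (asm) ln_less_cancel_iff) auto
qed

definition qG :: "real \<Rightarrow> nat \<Rightarrow> real" where
  "qG a n = fact n * real n powr a / Gamma (1 + a + real n)"

lemma qG_lim:
  assumes a: "(a::real) > 0"
  shows "qG a \<longlonglongrightarrow> 1"
proof -
  have nn: "a \<notin> \<int>\<^sub>\<le>\<^sub>0" using a by (auto elim!: nonpos_Ints_cases)
  have "(\<lambda>n. Gamma_series a n / Gamma a) \<longlonglongrightarrow> Gamma a / Gamma a"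
    using a by (intro tendsto_divide Gamma_series_LIMSEQ tendsto_const) (auto simp: less_imp_neq[symmetric])
  moreover have "Gamma a > 0" using a by simp
  ultimately have L: "(\<lambda>n. Gamma_series a n / Gamma a) \<longlonglongrightarrow> 1" by simp
  have "eventually (\<lambda>n. Gamma_series a n / Gamma a = qG a n) sequentially"
    using eventually_ge_at_top[of "1::nat"]
  proof eventually_elim
    case (elim n)
    have Gp: "Gamma a > 0" using a by simp
    have p: "pochhammer a (n + 1) = Gamma (1 + a + real n) / Gamma a"
      using pochhammer_Gamma[OF nn, of "n + 1"] by (simp add: ac_simps)
    have e: "exp (a * of_real (ln (of_nat n))) = real n powr a" using elim by (simp add: powr_def)
    show ?case unfolding Gamma_series_def qG_def p e using Gp by (simp add: field_simps)
  qed
  then show ?thesis using L by (rule Lim_transform_eventually[rotated])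
qed

lemma rmom_qG:
  assumes "n \<ge> 1"
  shows "fact n * Gamma (1 + a) / Gamma (1 + a + real n) = Gamma (1 + a) * qG a n / real n powr a"
  using assms by (simp add: qG_def field_simps)

lemma asym_E:
  assumes a: "(a::real) > 0"
  shows "(\<lambda>n. fact n * Gamma (1 + a) / Gamma (1 + a + real n)) \<sim>[at_top] (\<lambda>n. Gamma (a + 1) * real n powr (- a))"
proof (rule asymp_equivI')
  have "eventually (\<lambda>n. qG a n = fact n * Gamma (1 + a) / Gamma (1 + a + real n) / (Gamma (a + 1) * real n powr (- a))) at_top"
    using eventually_ge_at_top[of "1::nat"]
  proof eventually_elim
    case (elim n)
    have "Gamma (1 + a) > 0" using a by simp
    then show ?case using elim rmom_qG[OF elim, of a]
      by (simp add: powr_minus field_simps add.commute)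
  qed
  then show "((\<lambda>n. fact n * Gamma (1 + a) / Gamma (1 + a + real n) / (Gamma (a + 1) * real n powr (- a))) \<longlongrightarrow> 1) at_top"
    using qG_lim[OF a] by (rule Lim_transform_eventually[rotated])
qed

lemma asym_V:
  assumes a: "(a::real) > 0"
  shows "(\<lambda>n. fact n * Gamma (1 + 2 * a) / Gamma (1 + 2 * a + real n) - (fact n * Gamma (1 + a) / Gamma (1 + a + real n))\<^sup>2)
     \<sim>[at_top] (\<lambda>n. (Gamma (2 * a + 1) - (Gamma (a + 1))\<^sup>2) * real n powr (- 2 * a))"
proof (rule asymp_equivI')
  define c where "c = Gamma (2 * a + 1) - (Gamma (a + 1))\<^sup>2"
  have c: "c > 0" using Gamma_sq_less[OF a] by (simp add: c_def add.commute)
  have ev: "eventually (\<lambda>n. (Gamma (1 + 2 * a) * qG (2 * a) n - (Gamma (1 + a))^2 * (qG a n)\<^sup>2) / c =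
     (fact n * Gamma (1 + 2 * a) / Gamma (1 + 2 * a + real n) - (fact n * Gamma (1 + a) / Gamma (1 + a + real n))\<^sup>2) /
     ((Gamma (2 * a + 1) - (Gamma (a + 1))\<^sup>2) * real n powr (- 2 * a))) at_top"
    using eventually_ge_at_top[of "1::nat"]
  proof eventually_elim
    case (elim n)
    have np: "real n powr a > 0" "real n powr (2 * a) > 0" using elim by auto
    have sq: "(real n powr a)\<^sup>2 = real n powr (2 * a)"
    proof -
      have "(real n powr a)\<^sup>2 = real n powr a * real n powr a" by (rule power2_eq_square)
      also have "\<dots> = real n powr (a + a)" by (rule powr_add[symmetric])
      finally show ?thesis by (simp only: mult_2)
    qed
    have sq2: "real n powr (a * 2) = real n powr a * real n powr a"
      using sq by (simp add: power2_eq_square mult.commute)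
    have m2: "real n powr (- 2 * a) = 1 / real n powr (2 * a)"
      by (simp add: powr_minus divide_inverse)
    show ?case
      unfolding rmom_qG[OF elim, of a] rmom_qG[OF elim, of "2 * a"] m2 c_def[symmetric]
      using c np by (simp add: field_simps power2_eq_square sq2)
  qed
  have "((\<lambda>n. (Gamma (1 + 2 * a) * qG (2 * a) n - (Gamma (1 + a))^2 * (qG a n)\<^sup>2) / c) \<longlongrightarrow>
      (Gamma (1 + 2 * a) * 1 - (Gamma (1 + a))^2 * 1\<^sup>2) / c) at_top"
    using a c by (intro tendsto_intros qG_lim) auto
  moreover have ce: "Gamma (1 + 2 * a) * 1 - (Gamma (1 + a))^2 * 1\<^sup>2 = c" by (simp add: c_def add.commute)
  ultimately have L1: "((\<lambda>n. (Gamma (1 + 2 * a) * qG (2 * a) n - (Gamma (1 + a))^2 * (qG a n)\<^sup>2) / c) \<longlongrightarrow> 1) at_top"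
    using c by (simp only: ce) simp
  show "((\<lambda>n. (fact n * Gamma (1 + 2 * a) / Gamma (1 + 2 * a + real n) - (fact n * Gamma (1 + a) / Gamma (1 + a + real n))\<^sup>2) /
     ((Gamma (2 * a + 1) - (Gamma (a + 1))\<^sup>2) * real n powr (- 2 * a))) \<longlongrightarrow> 1) at_top"
    using ev L1 by (rule Lim_transform_eventually[rotated])
qed



lemma rmom_nat: "rmom (real k) m = fact m * fact k / fact (k + m)"
proof -
  have a: "Gamma (1 + real k) = fact k" by (rule Gamma_fact)
  have b: "Gamma (1 + real k + real m) = fact (k + m)"
    using Gamma_fact[of "k + m", where 'a=real] by (simp add: add.assoc)
  show ?thesis unfolding rmom_def a b ..
qed

lemma rmom1: "rmom 1 m = 1 / (real m + 1)"
proof -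
  have f: "fact (1 + m) = (real m + 1) * (fact m :: real)" by (simp add: fact_Suc)
  have "fact m > (0::real)" by simp
  then show ?thesis using rmom_nat[of 1 m] f by simp
qed

lemma rmom2: "rmom 2 m = 2 / ((real m + 1) * (real m + 2))"
proof -
  have f: "fact (2 + m) = (real m + 2) * ((real m + 1) * (fact m :: real))"
    by (simp add: fact_Suc numeral_2_eq_2 algebra_simps)
  have "fact m > (0::real)" by simp
  then show ?thesis using rmom_nat[of 2 m] f by (simp add: ac_simps)
qed

lemma var_arith: "2 / ((real m + 1) * (real m + 2)) - (1 / (real m + 1))\<^sup>2 = real m / ((real m + 1)\<^sup>2 * (real m + 2))"
proof -
  define a where "a = real m"
  have p: "a + 1 \<noteq> 0" "a + 2 \<noteq> 0" unfolding a_def by linarith+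
  have "2 / ((a + 1) * (a + 2)) - (1 / (a + 1))\<^sup>2 = a / ((a + 1)\<^sup>2 * (a + 2))"
    using p by (simp add: divide_simps power2_eq_square)
  then show ?thesis unfolding a_def .
qed

lemma cdf_Exp:
  "cdf (density lborel (\<lambda>x. ennreal (exponential_density 1 x))) x = (if 0 \<le> x then 1 - exp (- x) else 0)"
  unfolding cdf_def measure_def using emeasure_erlang_density[of 1 0 x]
  by (simp add: erlang_CDF_0)

context gapsetup begin

interpretation prob_space M by (rule P)

lemma AE_Zpos:
  assumes m: "m \<ge> 1"
  shows "AE \<omega> in M. 0 < gapZ X m \<omega>"
proof -
  have "prob {\<omega>\<in>space M. 0 < gapZ X m \<omega>} = 1" using tailZ[OF m, of 0] by simp
  then have "AE \<omega> in M. \<omega> \<in> {\<omega>\<in>space M. 0 < gapZ X m \<omega>}" by (rule AE_prob_1)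
  then show ?thesis by eventually_elim auto
qed

lemma EZ_pow1:
  assumes m: "m \<ge> 1"
  shows "expectation (gapZ X m) = expectation (\<lambda>\<omega>. gapZ X m \<omega> powr 1)"
proof (rule integral_cong_AE)
  show "gapZ X m \<in> borel_measurable M" by (rule measZ[OF m])
  have [measurable]: "gapZ X m \<in> borel_measurable M" by (rule measZ[OF m])
  show "(\<lambda>\<omega>. gapZ X m \<omega> powr 1) \<in> borel_measurable M" by measurable
  show "AE \<omega> in M. gapZ X m \<omega> = gapZ X m \<omega> powr 1"
    using AE_Zpos[OF m] by eventually_elim simp
qed

lemma EZ: "m \<ge> 1 \<Longrightarrow> expectation (gapZ X m) = 1 / (real m + 1)"
  using EZ_pow1 expZ[of m 1] rmom1[of m] by simp

lemma VZ:
  assumes m: "m \<ge> 1"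
  shows "variance (gapZ X m) = real m / ((real m + 1)\<^sup>2 * (real m + 2))"
proof -
  have [measurable]: "gapZ X m \<in> borel_measurable M" by (rule measZ[OF m])
  have "variance (gapZ X m) = variance (\<lambda>\<omega>. gapZ X m \<omega> powr 1)"
    unfolding EZ_pow1[OF m]
  proof (rule integral_cong_AE)
    show "AE \<omega> in M. (gapZ X m \<omega> - expectation (\<lambda>\<omega>. gapZ X m \<omega> powr 1))\<^sup>2 =
      (gapZ X m \<omega> powr 1 - expectation (\<lambda>\<omega>. gapZ X m \<omega> powr 1))\<^sup>2"
      using AE_Zpos[OF m] by eventually_elim simp
  qed measurable
  also have "\<dots> = rmom 2 m - (rmom 1 m)\<^sup>2" using varZ[OF m, of 1] by simp
  also have "\<dots> = real m / ((real m + 1)\<^sup>2 * (real m + 2))"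
    unfolding rmom1 rmom2 by (rule var_arith)
  finally show ?thesis .
qed

lemma cdf_scaled:
  assumes n: "n \<ge> 1"
  shows "cdf (distr M borel (\<lambda>\<omega>. real n * gapZ X n \<omega>)) x = gapF n (x / real n)"
proof -
  have [measurable]: "gapZ X n \<in> borel_measurable M" by (rule measZ[OF n])
  have "cdf (distr M borel (\<lambda>\<omega>. real n * gapZ X n \<omega>)) x = prob ((\<lambda>\<omega>. real n * gapZ X n \<omega>) -` {..x} \<inter> space M)"
    unfolding cdf_def by (subst measure_distr) auto
  also have "(\<lambda>\<omega>. real n * gapZ X n \<omega>) -` {..x} \<inter> space M = gapZ X n -` {..x / real n} \<inter> space M"
    using n by (auto simp: field_simps)
  also have "prob \<dots> = cdf (distr M borel (gapZ X n)) (x / real n)"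
    unfolding cdf_def by (subst measure_distr) auto
  finally show ?thesis using cdfZ[OF n] by simp
qed

lemma weak:
  "weak_conv_m (\<lambda>m. distr M borel (\<lambda>\<omega>. real m * gapZ X m \<omega>))
     (density lborel (\<lambda>x. ennreal (exponential_density 1 x)))"
  unfolding weak_conv_m_def weak_conv_def
proof (intro allI impI)
  fix x :: real
  show "(\<lambda>n. cdf (distr M borel (\<lambda>\<omega>. real n * gapZ X n \<omega>)) x) \<longlonglongrightarrow>
     cdf (density lborel (\<lambda>x. ennreal (exponential_density 1 x))) x"
  proof (cases "0 \<le> x")
    case False
    have "eventually (\<lambda>n. 0 = cdf (distr M borel (\<lambda>\<omega>. real n * gapZ X n \<omega>)) x) sequentially"
      using eventually_ge_at_top[of "1::nat"]
    proof eventually_elim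
      case (elim n)
      then show ?case using False by (simp add: cdf_scaled gapF_def divide_neg_pos)
    qed
    then show ?thesis using False by (simp add: cdf_Exp Lim_transform_eventually[OF tendsto_const])
  next
    case True
    have "eventually (\<lambda>n. 1 - (1 + (- x) / real n) ^ n = cdf (distr M borel (\<lambda>\<omega>. real n * gapZ X n \<omega>)) x) sequentially"
      using eventually_ge_at_top[of "max 1 (nat \<lceil>x\<rceil>)"]
    proof eventually_elim
      case (elim n)
      then have n1: "n \<ge> 1" and nx: "x \<le> real n" by (auto simp: nat_le_iff ceiling_le_iff)
      have "x / real n \<le> 1" using n1 nx by (simp add: divide_le_eq)
      moreover have "0 \<le> x / real n" using True by simp
      ultimately show ?case using n1 by (simp add: cdf_scaled gapF_def diff_divide_distrib)
    qed
    moreover have "(\<lambda>n. 1 - (1 + (- x) / real n) ^ n) \<longlonglongrightarrow> 1 - exp (- x)"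
      by (intro tendsto_diff tendsto_const tendsto_exp_limit_sequentially)
    ultimately show ?thesis using True by (simp add: cdf_Exp Lim_transform_eventually)
  qed
qed

end


context gapsetup begin

lemma main:
  shows
    "(\<forall>m\<ge>1. \<forall>t. cdf (distr M borel (gapZ X m)) t = gapF m t)
     \<and> (\<forall>m\<ge>1. \<forall>\<alpha>>0.
          prob_space.expectation M (\<lambda>\<omega>. gapZ X m \<omega> powr \<alpha>)
            = fact m * Gamma (1 + \<alpha>) / Gamma (1 + \<alpha> + real m)
        \<and> prob_space.variance M (\<lambda>\<omega>. gapZ X m \<omega> powr \<alpha>)
            = fact m * Gamma (1 + 2 * \<alpha>) / Gamma (1 + 2 * \<alpha> + real m)
              - (fact m * Gamma (1 + \<alpha>) / Gamma (1 + \<alpha> + real m))\<^sup>2)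
     \<and> (\<forall>m\<ge>1. prob_space.expectation M (gapZ X m) = 1 / (real m + 1)
        \<and> prob_space.variance M (gapZ X m) = real m / ((real m + 1)\<^sup>2 * (real m + 2)))
     \<and> (\<forall>\<alpha>>0.
          ((\<lambda>m. prob_space.expectation M (\<lambda>\<omega>. gapZ X m \<omega> powr \<alpha>))
            \<sim>[at_top] (\<lambda>m. Gamma (\<alpha> + 1) * real m powr (- \<alpha>)))
        \<and> ((\<lambda>m. prob_space.variance M (\<lambda>\<omega>. gapZ X m \<omega> powr \<alpha>))
            \<sim>[at_top] (\<lambda>m. (Gamma (2 * \<alpha> + 1) - (Gamma (\<alpha> + 1))\<^sup>2) * real m powr (- 2 * \<alpha>))))
     \<and> weak_conv_m (\<lambda>m. distr M borel (\<lambda>\<omega>. real m * gapZ X m \<omega>))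
         (density lborel (\<lambda>x. ennreal (exponential_density 1 x)))"
proof (intro conjI allI impI)
  fix m :: nat and t :: real assume "m \<ge> 1"
  then show "cdf (distr M borel (gapZ X m)) t = gapF m t" by (rule cdfZ)
next
  fix m :: nat and \<alpha> :: real assume m: "m \<ge> 1" and a: "\<alpha> > 0"
  show "prob_space.expectation M (\<lambda>\<omega>. gapZ X m \<omega> powr \<alpha>) = fact m * Gamma (1 + \<alpha>) / Gamma (1 + \<alpha> + real m)"
    using expZ[OF m a] by (simp add: rmom_def)
  show "prob_space.variance M (\<lambda>\<omega>. gapZ X m \<omega> powr \<alpha>)
            = fact m * Gamma (1 + 2 * \<alpha>) / Gamma (1 + 2 * \<alpha> + real m)
              - (fact m * Gamma (1 + \<alpha>) / Gamma (1 + \<alpha> + real m))\<^sup>2"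
    using varZ[OF m a] by (simp add: rmom_def)
next
  fix m :: nat assume m: "m \<ge> 1"
  show "prob_space.expectation M (gapZ X m) = 1 / (real m + 1)" by (rule EZ[OF m])
  show "prob_space.variance M (gapZ X m) = real m / ((real m + 1)\<^sup>2 * (real m + 2))" by (rule VZ[OF m])
next
  fix \<alpha> :: real assume a: "\<alpha> > 0"
  show "(\<lambda>m. prob_space.expectation M (\<lambda>\<omega>. gapZ X m \<omega> powr \<alpha>)) \<sim>[at_top] (\<lambda>m. Gamma (\<alpha> + 1) * real m powr (- \<alpha>))"
  proof (rule asymp_equiv_transfer[OF asym_E[OF a]])
    show "eventually (\<lambda>m. fact m * Gamma (1 + \<alpha>) / Gamma (1 + \<alpha> + real m) = prob_space.expectation M (\<lambda>\<omega>. gapZ X m \<omega> powr \<alpha>)) at_top"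
      using eventually_ge_at_top[of "1::nat"] by eventually_elim (use a in \<open>simp add: expZ rmom_def\<close>)
  qed simp
  show "(\<lambda>m. prob_space.variance M (\<lambda>\<omega>. gapZ X m \<omega> powr \<alpha>)) \<sim>[at_top] (\<lambda>m. (Gamma (2 * \<alpha> + 1) - (Gamma (\<alpha> + 1))\<^sup>2) * real m powr (- 2 * \<alpha>))"
  proof (rule asymp_equiv_transfer[OF asym_V[OF a]])
    show "eventually (\<lambda>m. fact m * Gamma (1 + 2 * \<alpha>) / Gamma (1 + 2 * \<alpha> + real m) - (fact m * Gamma (1 + \<alpha>) / Gamma (1 + \<alpha> + real m))\<^sup>2 = prob_space.variance M (\<lambda>\<omega>. gapZ X m \<omega> powr \<alpha>)) at_top"
      using eventually_ge_at_top[of "1::nat"] by eventually_elim (use a in \<open>simp add: varZ rmom_def\<close>)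
  qed simp
next
  show "weak_conv_m (\<lambda>m. distr M borel (\<lambda>\<omega>. real m * gapZ X m \<omega>))
         (density lborel (\<lambda>x. ennreal (exponential_density 1 x)))" by (rule weak)
qed

end

theorem lemma1:
  fixes M :: "'a measure" and X :: "nat \<Rightarrow> 'a \<Rightarrow> real"
  assumes "prob_space M"
    and "prob_space.indep_vars M (\<lambda>_. borel) X {1..}"
    and "\<And>i. i \<ge> 1 \<Longrightarrow> distr M lborel (X i) = uniform_measure lborel {0<..1}"
  shows
    "(\<forall>m\<ge>1. \<forall>t. cdf (distr M borel (gapZ X m)) t = gapF m t)
     \<and> (\<forall>m\<ge>1. \<forall>\<alpha>>0.
          prob_space.expectation M (\<lambda>\<omega>. gapZ X m \<omega> powr \<alpha>)
            = fact m * Gamma (1 + \<alpha>) / Gamma (1 + \<alpha> + real m)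
        \<and> prob_space.variance M (\<lambda>\<omega>. gapZ X m \<omega> powr \<alpha>)
            = fact m * Gamma (1 + 2 * \<alpha>) / Gamma (1 + 2 * \<alpha> + real m)
              - (fact m * Gamma (1 + \<alpha>) / Gamma (1 + \<alpha> + real m))\<^sup>2)
     \<and> (\<forall>m\<ge>1. prob_space.expectation M (gapZ X m) = 1 / (real m + 1)
        \<and> prob_space.variance M (gapZ X m) = real m / ((real m + 1)\<^sup>2 * (real m + 2)))
     \<and> (\<forall>\<alpha>>0.
          ((\<lambda>m. prob_space.expectation M (\<lambda>\<omega>. gapZ X m \<omega> powr \<alpha>))
            \<sim>[at_top] (\<lambda>m. Gamma (\<alpha> + 1) * real m powr (- \<alpha>)))
        \<and> ((\<lambda>m. prob_space.variance M (\<lambda>\<omega>. gapZ X m \<omega> powr \<alpha>))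
            \<sim>[at_top] (\<lambda>m. (Gamma (2 * \<alpha> + 1) - (Gamma (\<alpha> + 1))\<^sup>2) * real m powr (- 2 * \<alpha>))))
     \<and> weak_conv_m (\<lambda>m. distr M borel (\<lambda>\<omega>. real m * gapZ X m \<omega>))
         (density lborel (\<lambda>x. ennreal (exponential_density 1 x)))"
  by (rule gapsetup.main[OF gapsetup.intro[OF assms]])

end
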